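(* Let $\varepsilon\neq0$ and let $\mathbf x:\mathbb R\to\mathbb R^3$ be a solution of the $\varepsilon$-revised system $$\dot{\mathbf x}=\mathbf x\times\mathbf m(\mathbf x)+\varepsilon[(\mathbf x\times\mathbf m(\mathbf x))\times\mathbf m(\mathbf x)].$$ Then there exist equilibrium points $\mathbf x_m,\mathbf x_M\in\mathbf E$ such that $$\lim_{t\to-\infty}\mathbf x(t)=\mathbf x_M\quad\text{and}\quad\lim_{t\to+\infty}\mathbf x(t)=\mathbf x_m .$$
   Context: Fix constants $0<a_1<a_2<a_3$ and $a,b,c\in\mathbb R$. Set $\mathbf m(\mathbf x)=(a_1x^1+a,\ a_2x^2+b,\ a_3x^3+c)$; $\times$ is the cross product. $\mathbf E=\{\mathbf x\in\mathbb R^3:\mathbf x\times\mathbf m(\mathbf x)=\mathbf 0\}$ is the set of equilibrium points of the $\varepsilon$-revised system (for $\varepsilon\ne0$). *)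

theory Defs
  imports "HOL-Analysis.Analysis" "HOL-Analysis.Cross3"
begin

definition mvec :: "real \<Rightarrow> real \<Rightarrow> real \<Rightarrow> real \<Rightarrow> real \<Rightarrow> real \<Rightarrow> real^3 \<Rightarrow> real^3" where
  "mvec a1 a2 a3 a b c x = vector [a1 * x$1 + a, a2 * x$2 + b, a3 * x$3 + c]"

definition revised_field ::
  "real \<Rightarrow> real \<Rightarrow> real \<Rightarrow> real \<Rightarrow> real \<Rightarrow> real \<Rightarrow> real \<Rightarrow> real^3 \<Rightarrow> real^3" where
  "revised_field a1 a2 a3 a b c \<epsilon> x =
     cross3 x (mvec a1 a2 a3 a b c x)
     + \<epsilon> *\<^sub>R cross3 (cross3 x (mvec a1 a2 a3 a b c x)) (mvec a1 a2 a3 a b c x)"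

definition equilibria :: "real \<Rightarrow> real \<Rightarrow> real \<Rightarrow> real \<Rightarrow> real \<Rightarrow> real \<Rightarrow> (real^3) set" where
  "equilibria a1 a2 a3 a b c = {x. cross3 x (mvec a1 a2 a3 a b c x) = 0}"

end

theory Submission
  imports Defs "HOL-Computational_Algebra.Polynomial"
begin

lemma generic_conv:
  fixes x :: "real \<Rightarrow> 'a::euclidean_space" and F :: "'a \<Rightarrow> 'a" and W \<phi> :: "'a \<Rightarrow> real"
  assumes deriv: "\<And>t. (x has_vector_derivative F (x t)) (at t)"
    and contF: "continuous_on UNIV F"
    and bnd: "bounded (range x)"
    and contW: "continuous_on UNIV W" and contP: "continuous_on UNIV \<phi>"
    and Pnn: "\<And>y. \<phi> y \<ge> 0"
    and Wd: "\<And>t. ((\<lambda>t. W (x t)) has_real_derivative - \<phi> (x t)) (at t)"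
    and fin: "\<And>l. finite {p. \<phi> p = 0 \<and> W p = l}"
  shows "\<exists>q. \<phi> q = 0 \<and> (x \<longlongrightarrow> q) at_top"
proof -
  obtain B where B: "\<And>t. norm (x t) \<le> B" using bnd unfolding bounded_iff by auto
  define K where "K = cball (0::'a) B"
  have cK: "compact K" unfolding K_def by simp
  have xK: "\<And>t. x t \<in> K" unfolding K_def using B by simp
  have "bounded (F ` K)"
    using compact_continuous_image[OF continuous_on_subset[OF contF] cK] compact_imp_bounded by blast
  then obtain M0 where M0: "\<And>y. y \<in> K \<Longrightarrow> norm (F y) \<le> M0" unfolding bounded_iff by auto
  define M where "M = max M0 1"
  have Mpos: "M > 0" unfolding M_def by simp
  have FM: "\<And>t. norm (F (x t)) \<le> M" using M0 xK unfolding M_def by (meson max.coboundedI1)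
  have contx: "\<And>t. isCont x t" using deriv has_vector_derivative_continuous by blast
  have lip: "norm (x t - x s) \<le> M * (t - s)" if "s \<le> t" for s t
  proof (cases "s = t")
    case True then show ?thesis by simp
  next
    case False
    then have st: "s < t" using that by simp
    have "\<exists>z\<in>{s<..<t}. norm (x t - x s) \<le> norm ((\<lambda>h. h *\<^sub>R F (x z)) (t - s))"
      apply (rule mvt_general[OF st])
      using contx continuous_at_imp_continuous_on apply blast
      using deriv unfolding has_vector_derivative_def by blast
    then obtain z where "norm (x t - x s) \<le> norm ((t - s) *\<^sub>R F (x z))" by auto
    also have "\<dots> = (t - s) * norm (F (x z))" using st by simp
    also have "\<dots> \<le> (t - s) * M" using FM st by (simp add: mult_left_mono)
    finally show ?thesis by (simp add: mult.commute)
  qed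
  have Wmono: "W (x t) \<le> W (x s)" if "s \<le> t" for s t
    apply (rule DERIV_nonpos_imp_nonincreasing[OF that])
    using Wd Pnn by (metis neg_le_0_iff_le)
  have "bounded (W ` K)"
    using compact_continuous_image[OF continuous_on_subset[OF contW] cK] compact_imp_bounded by blast
  then obtain C where C: "\<And>y. y \<in> K \<Longrightarrow> norm (W y) \<le> C" unfolding bounded_iff by auto
  have bddb: "bdd_below (range (\<lambda>t. W (x t)))"
    unfolding bdd_below_def using C xK by (metis abs_le_iff minus_le_iff real_norm_def rangeE)
  define L where "L = Inf (range (\<lambda>t. W (x t)))"
  have WL: "((\<lambda>t. W (x t)) \<longlongrightarrow> L) at_top"
  proof (rule decreasing_tendsto)
    show "\<forall>\<^sub>F n in at_top. L \<le> W (x n)" unfolding L_def using bddb by (simp add: cInf_lower)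
    fix y assume "L < y"
    then obtain t0 where "W (x t0) < y" unfolding L_def using cInf_less_iff[OF _ bddb] by auto
    then show "\<forall>\<^sub>F n in at_top. W (x n) < y"
      using Wmono eventually_ge_at_top[of t0] by (metis (mono_tags, lifting) eventually_mono le_less_trans)
  qed
  define S where "S = {p. \<phi> p = 0 \<and> W p = L}"
  have finS: "finite S" unfolding S_def by (rule fin)
  have limpt: "p \<in> S" if tlim: "filterlim t at_top sequentially" and xlim: "(\<lambda>n. x (t n)) \<longlonglongrightarrow> p" for t p
  proof -
    have WL1: "(\<lambda>n. W (x (t n))) \<longlonglongrightarrow> L" using filterlim_compose[OF WL tlim] by simp
    have "(\<lambda>n. W (x (t n))) \<longlonglongrightarrow> W p"
      using continuous_on_tendsto_compose[OF contW xlim] by simp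
    then have WpL: "W p = L" using WL1 LIMSEQ_unique by blast
    have "\<phi> p = 0"
    proof (rule ccontr)
      assume "\<phi> p \<noteq> 0"
      then have pp: "\<phi> p > 0" using Pnn[of p] by simp
      define \<delta> where "\<delta> = \<phi> p / 2"
      have dpos: "\<delta> > 0" unfolding \<delta>_def using pp by simp
      have "isCont \<phi> p" using contP continuous_on_eq_continuous_at by blast
      then obtain \<rho> where rpos: "\<rho> > 0" and rho: "\<And>y. dist y p < \<rho> \<Longrightarrow> dist (\<phi> y) (\<phi> p) < \<delta>"
        unfolding continuous_at_eps_delta using dpos by blast
      have rho2: "\<phi> y > \<delta>" if "dist y p < \<rho>" for y
        proof -
        have "\<bar>\<phi> y - \<phi> p\<bar> < \<phi> p / 2" using rho[OF that] unfolding \<delta>_def dist_real_def .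
        then have "\<phi> p - \<phi> y < \<phi> p / 2" by linarith
        then show ?thesis unfolding \<delta>_def by linarith
      qed
      define \<tau> where "\<tau> = \<rho> / (2 * M)"
      have tpos: "\<tau> > 0" unfolding \<tau>_def using rpos Mpos by simp
      have ev: "\<forall>\<^sub>F n in sequentially. dist (x (t n)) p < \<rho> / 2"
        using xlim rpos unfolding tendsto_iff by (meson half_gt_zero)
      have drop: "W (x (t n + \<tau>)) \<le> W (x (t n)) - \<delta> * \<tau>" if close: "dist (x (t n)) p < \<rho> / 2" for n
      proof -
        have "W (x (t n + \<tau>)) + \<delta> * (t n + \<tau>) \<le> W (x (t n)) + \<delta> * t n"
        proof (rule DERIV_nonpos_imp_nonincreasing[of "t n" "t n + \<tau>" "\<lambda>s. W (x s) + \<delta> * s"])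
          show "t n \<le> t n + \<tau>" using tpos by simp
          fix s assume s1: "t n \<le> s" and s2: "s \<le> t n + \<tau>"
          have "norm (x s - x (t n)) \<le> M * (s - t n)" using lip s1 by simp
          also have "\<dots> \<le> M * \<tau>" using s2 Mpos by simp
          also have "\<dots> = \<rho> / 2" unfolding \<tau>_def using Mpos by simp
          finally have "dist (x s) p < \<rho>"
            using close dist_triangle[of "x s" p "x (t n)"] by (simp add: dist_norm)
          then have "\<phi> (x s) > \<delta>" by (rule rho2)
          moreover have "((\<lambda>s. W (x s) + \<delta> * s) has_real_derivative (- \<phi> (x s) + \<delta>)) (at s)"
            by (rule derivative_eq_intros Wd)+ auto
          ultimately show "\<exists>y. ((\<lambda>s. W (x s) + \<delta> * s) has_real_derivative y) (at s) \<and> y \<le> 0"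
            by (intro exI[of _ "- \<phi> (x s) + \<delta>"]) simp
        qed
        then show ?thesis by (simp add: algebra_simps)
      qed
      have tlim2: "filterlim (\<lambda>n. \<tau> + t n) at_top sequentially"
        by (rule filterlim_tendsto_add_at_top[OF tendsto_const tlim])
      have WL2: "(\<lambda>n. W (x (t n + \<tau>))) \<longlonglongrightarrow> L"
        using filterlim_compose[OF WL tlim2] by (simp add: add.commute)
      have "L \<le> L - \<delta> * \<tau>"
        apply (rule tendsto_le[OF _ tendsto_diff[OF WL1 tendsto_const] WL2])
        using ev drop by (auto elim: eventually_mono)
      then show False using mult_pos_pos[OF dpos tpos] by simp
    qed
    then show ?thesis unfolding S_def using WpL by simp
  qed
  have evballs: "\<forall>\<^sub>F s in at_top. \<exists>q\<in>S. dist (x s) q < \<eta>" if epos: "\<eta> > 0" for \<eta>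
  proof (rule ccontr)
    assume "\<not> ?thesis"
    then have "\<forall>N. \<exists>s\<ge>N. \<forall>q\<in>S. \<not> dist (x s) q < \<eta>"
      unfolding eventually_at_top_linorder by (meson not_le)
    then have "\<forall>n::nat. \<exists>s. s \<ge> real n \<and> (\<forall>q\<in>S. \<not> dist (x s) q < \<eta>)" by blast
    then obtain t where tt: "\<And>n::nat. t n \<ge> real n \<and> (\<forall>q\<in>S. \<not> dist (x (t n)) q < \<eta>)"
      by metis
    have t1: "\<And>n. t n \<ge> real n" and t2: "\<And>n q. q \<in> S \<Longrightarrow> \<not> dist (x (t n)) q < \<eta>"
      using tt by auto
    have tlim: "filterlim t at_top sequentially"
      by (rule filterlim_at_top_mono[OF filterlim_real_sequentially]) (use t1 in auto)
    obtain p r where "p \<in> K" and r: "strict_mono r" and conv: "((\<lambda>n. x (t n)) \<circ> r) \<longlonglongrightarrow> p"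
      using compact_imp_seq_compact[OF cK] xK unfolding seq_compact_def by metis
    have "filterlim (t \<circ> r) at_top sequentially"
      using filterlim_compose[OF tlim filterlim_subseq[OF r]] by (simp add: comp_def)
    moreover have "(\<lambda>n. x ((t \<circ> r) n)) \<longlonglongrightarrow> p" using conv by (simp add: comp_def)
    ultimately have pS: "p \<in> S" by (rule limpt)
    have "\<forall>\<^sub>F n in sequentially. dist (((\<lambda>n. x (t n)) \<circ> r) n) p < \<eta>"
      using conv epos by (simp add: tendsto_iff)
    then obtain n where "dist (x (t (r n))) p < \<eta>" using eventually_sequentially by auto
    then show False using t2[OF pS] by simp
  qed
  obtain e0 where e0pos: "e0 > 0" and e0: "\<And>q q'. q \<in> S \<Longrightarrow> q' \<in> S \<Longrightarrow> q \<noteq> q' \<Longrightarrow> 2 * e0 \<le> dist q q'"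
  proof -
    define D where "D = (\<lambda>(q, q'). dist q q') ` {z \<in> S \<times> S. fst z \<noteq> snd z}"
    have finD: "finite D" unfolding D_def using finS by auto
    have Dpos: "\<And>d. d \<in> D \<Longrightarrow> d > 0" unfolding D_def by auto
    show ?thesis
    proof (cases "D = {}")
      case True
      then show ?thesis using that[of 1] unfolding D_def by auto
    next
      case False
      have "Min D > 0" using Dpos finD False by simp
      moreover have "\<And>q q'. q \<in> S \<Longrightarrow> q' \<in> S \<Longrightarrow> q \<noteq> q' \<Longrightarrow> Min D \<le> dist q q'"
        using finD unfolding D_def by (intro Min_le) auto
      ultimately show ?thesis using that[of "Min D / 2"] by auto
    qed
  qed
  obtain T where T: "\<And>s. s \<ge> T \<Longrightarrow> \<exists>q\<in>S. dist (x s) q < e0"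
    using evballs[OF e0pos] unfolding eventually_at_top_linorder by auto
  obtain q0 where q0S: "q0 \<in> S" and q0: "dist (x T) q0 < e0" using T[of T] by auto
  have inball: "dist (x s) q0 < e0" if "s \<ge> T" for s
  proof -
    define e1 where "e1 = ball q0 e0"
    define e2 where "e2 = (\<Union>q\<in>S - {q0}. ball q e0)"
    have "connected (x ` {T..})"
      by (rule connected_continuous_image[OF continuous_at_imp_continuous_on connected_Ici]) (use contx in auto)
    moreover have "open e1" "open e2" unfolding e1_def e2_def by auto
    moreover have "x ` {T..} \<subseteq> e1 \<union> e2"
    proof
      fix y assume "y \<in> x ` {T..}"
      then obtain s where "s \<ge> T" "y = x s" by auto
      then obtain q where "q \<in> S" "dist y q < e0" using T by auto
      then show "y \<in> e1 \<union> e2" unfolding e1_def e2_def by (cases "q = q0") (auto simp: dist_commute)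
    qed
    moreover have "e1 \<inter> e2 = {}"
    proof -
      { fix y q assume "q \<in> S" "q \<noteq> q0" "dist q0 y < e0" "dist q y < e0"
        then have "dist q0 q < 2 * e0" using dist_triangle[of q0 q y] by (simp add: dist_commute)
        then have False using e0[OF q0S \<open>q \<in> S\<close>] \<open>q \<noteq> q0\<close> by auto }
      then show ?thesis unfolding e1_def e2_def by (auto, metis)
    qed
    moreover have "e1 \<inter> x ` {T..} \<noteq> {}" unfolding e1_def using q0 by (auto simp: dist_commute)
    ultimately have "x ` {T..} \<subseteq> e1" unfolding connected_def by blast
    then show ?thesis unfolding e1_def using that by (auto simp: dist_commute)
  qed
  have "(x \<longlongrightarrow> q0) at_top"
  proof (rule tendstoI)
    fix \<eta> :: real assume epos: "\<eta> > 0"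
    have "\<forall>\<^sub>F s in at_top. \<exists>q\<in>S. dist (x s) q < min \<eta> e0" using evballs[of "min \<eta> e0"] epos e0pos by simp
    moreover have "\<forall>\<^sub>F s in at_top. dist (x s) q0 < e0" unfolding eventually_at_top_linorder using inball by blast
    ultimately show "\<forall>\<^sub>F s in at_top. dist (x s) q0 < \<eta>"
    proof eventually_elim
      case (elim s)
      then obtain q where qS: "q \<in> S" and d: "dist (x s) q < min \<eta> e0" by auto
      have "q = q0"
      proof (rule ccontr)
        assume "q \<noteq> q0"
        then have "2 * e0 \<le> dist q q0" using e0[OF qS q0S] by simp
        moreover have "dist q q0 < 2 * e0" using d elim(2) dist_triangle[of q q0 "x s"] by (simp add: dist_commute)
        ultimately show False by simp
      qed
      then show ?case using d by simp
    qed
  qed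
  then show ?thesis using q0S unfolding S_def by auto
qed

lemma mvec_nth: "mvec a1 a2 a3 a b c z $ 1 = a1 * z$1 + a" "mvec a1 a2 a3 a b c z $ 2 = a2 * z$2 + b" "mvec a1 a2 a3 a b c z $ 3 = a3 * z$3 + c"
  by (simp_all add: mvec_def)
lemma c1: "continuous_on UNIV (\<lambda>z::real^3. k * z $ j + d)"
        by (intro continuous_intros)
lemma cont_mvec: "continuous_on UNIV (mvec a1 a2 a3 a b c)"
proof -
  have e: "mvec a1 a2 a3 a b c = (\<lambda>z. \<chi> i. mvec a1 a2 a3 a b c z $ i)" by simp
  have "continuous_on UNIV (\<lambda>z. mvec a1 a2 a3 a b c z $ i)" for i
  proof -
    consider "i = 1" | "i = 2" | "i = 3" using exhaust_3 by blast
    then show ?thesis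
    proof cases
      case 1 show ?thesis unfolding 1 mvec_nth by (rule c1)
    next
      case 2 show ?thesis unfolding 2 mvec_nth by (rule c1)
    next
      case 3 show ?thesis unfolding 3 mvec_nth by (rule c1)
    qed
  qed
  then have "continuous_on UNIV (\<lambda>z. \<chi> i. mvec a1 a2 a3 a b c z $ i)" by (rule continuous_on_vec_lambda)
  then show ?thesis using e by simp
qed
lemma cont_rf: "continuous_on UNIV (revised_field a1 a2 a3 a b c e)"
  unfolding revised_field_def by (intro continuous_intros continuous_on_cross cont_mvec)
lemma cross_ids:
  fixes y m :: "real^3"
  shows "inner m (cross3 y m) = 0"
    and "inner y (cross3 (cross3 y m) m) = - (norm (cross3 y m))\<^sup>2"
    and "inner m (cross3 (cross3 y m) m) = 0"
  unfolding power2_norm_eq_inner by (simp_all add: cross3_simps power2_eq_square)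

lemma d_norm2:
  fixes y :: "real \<Rightarrow> real^3"
  assumes "(y has_vector_derivative D) (at t)"
  shows "((\<lambda>t. (norm (y t))\<^sup>2) has_real_derivative 2 * inner (y t) D) (at t)"
proof -
  have "((\<lambda>t. inner (y t) (y t)) has_derivative (\<lambda>h. inner (y t) (h *\<^sub>R D) + inner (h *\<^sub>R D) (y t))) (at t)"
    using has_derivative_inner[OF assms[unfolded has_vector_derivative_def] assms[unfolded has_vector_derivative_def]] .
  then have "((\<lambda>t. inner (y t) (y t)) has_derivative (*) (2 * inner (y t) D)) (at t)"
    by (rule has_derivative_eq_rhs) (auto simp: inner_commute)
  then show ?thesis unfolding has_field_derivative_def power2_norm_eq_inner .
qed

lemma d_comp:
  fixes y :: "real \<Rightarrow> real^3"
  assumes "(y has_vector_derivative D) (at t)"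
  shows "((\<lambda>t. y t $ i) has_real_derivative D $ i) (at t)"
proof -
  have "((\<lambda>t. inner (y t) (axis i 1)) has_derivative (\<lambda>h. inner (h *\<^sub>R D) (axis i 1))) (at t)"
    using has_derivative_inner_left[OF assms[unfolded has_vector_derivative_def]] .
  then have "((\<lambda>t. y t $ i) has_derivative (*) (D $ i)) (at t)"
    unfolding cart_eq_inner_axis[symmetric] by (rule has_derivative_eq_rhs) (auto simp: cart_eq_inner_axis)
  then show ?thesis unfolding has_field_derivative_def .
qed

definition Vf :: "real \<Rightarrow> real \<Rightarrow> real \<Rightarrow> real \<Rightarrow> real \<Rightarrow> real \<Rightarrow> real^3 \<Rightarrow> real" where
  "Vf a1 a2 a3 a b c z = (a1*(z$1)^2 + a2*(z$2)^2 + a3*(z$3)^2)/2 + a*z$1 + b*z$2 + c*z$3"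

lemma d_V:
  fixes y :: "real \<Rightarrow> real^3"
  assumes "(y has_vector_derivative D) (at t)"
  shows "((\<lambda>t. Vf a1 a2 a3 a b c (y t)) has_real_derivative inner (mvec a1 a2 a3 a b c (y t)) D) (at t)"
  unfolding Vf_def
  apply (rule DERIV_cong)
   apply ((rule derivative_intros d_comp[OF assms]) | (simp; fail))+
  apply (simp add: inner_vec_def sum_3 mvec_nth algebra_simps)
  done

lemma sq_fin: "finite {y::real. y^2 = k}"
proof -
  have "{y::real. y^2 = k} \<subseteq> {sqrt k, - sqrt k}"
  proof
    fix y :: real assume "y \<in> {y. y^2 = k}"
    then have "sqrt k = \<bar>y\<bar>" by (auto simp: real_sqrt_abs)
    then show "y \<in> {sqrt k, - sqrt k}" by (cases "y \<ge> 0") auto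
  qed
  then show ?thesis by (rule finite_subset) simp
qed

lemma lam_fin:
  fixes a1 a2 a3 a b c R :: real
  assumes "a1 < a2" "a2 < a3" "R > 0"
  shows "finite {l. \<exists>p1 p2 p3. (a1-l)*p1 = -a \<and> (a2-l)*p2 = -b \<and> (a3-l)*p3 = -c \<and> p1^2+p2^2+p3^2 = R}"
proof -
  define Q1 where "Q1 = [:a1, -1:]"
  define Q2 where "Q2 = [:a2, -1:]"
  define Q3 where "Q3 = [:a3, -1:]"
  define P where "P = smult R (Q1^2*Q2^2*Q3^2) - (smult (a^2) (Q2^2*Q3^2) + smult (b^2) (Q1^2*Q3^2) + smult (c^2) (Q1^2*Q2^2))"
  have polyP: "poly P l = R*(a1-l)^2*(a2-l)^2*(a3-l)^2 - (a^2*(a2-l)^2*(a3-l)^2 + b^2*(a1-l)^2*(a3-l)^2 + c^2*(a1-l)^2*(a2-l)^2)" for l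
    unfolding P_def Q1_def Q2_def Q3_def by (simp add: algebra_simps)
  have sub: "{l. \<exists>p1 p2 p3. (a1-l)*p1 = -a \<and> (a2-l)*p2 = -b \<and> (a3-l)*p3 = -c \<and> p1^2+p2^2+p3^2 = R} \<subseteq> {l. poly P l = 0}"
  proof
    fix l assume "l \<in> {l. \<exists>p1 p2 p3. (a1-l)*p1 = -a \<and> (a2-l)*p2 = -b \<and> (a3-l)*p3 = -c \<and> p1^2+p2^2+p3^2 = R}"
    then obtain p1 p2 p3 where e1: "(a1-l)*p1 = -a" and e2: "(a2-l)*p2 = -b" and e3: "(a3-l)*p3 = -c" and eR: "p1^2+p2^2+p3^2 = R"
      by auto
    have s1: "a^2 = (a1-l)^2*p1^2" using e1 by (metis power_mult_distrib power2_minus)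
    have s2: "b^2 = (a2-l)^2*p2^2" using e2 by (metis power_mult_distrib power2_minus)
    have s3: "c^2 = (a3-l)^2*p3^2" using e3 by (metis power_mult_distrib power2_minus)
    have "poly P l = 0" unfolding polyP s1 s2 s3 eR[symmetric] by (simp add: algebra_simps)
    then show "l \<in> {l. poly P l = 0}" by simp
  qed
  define D where "D = a^2 + b^2 + c^2"
  define l0 where "l0 = a3 + 1 + 3 * D / R"
  have Dnn: "D \<ge> 0" unfolding D_def by simp
  have DR: "3 * D / R \<ge> 0" using Dnn assms(3) by simp
  have big: "R * (ai - l0)^2 > 3 * D" if "ai \<le> a3" for ai
  proof -
    have "l0 - ai \<ge> 1 + 3 * D / R" unfolding l0_def using that by simp
    then have "(l0 - ai)^2 \<ge> (1 + 3 * D / R)^2" using DR by (intro power_mono) auto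
    moreover have "(1 + 3 * D / R)^2 \<ge> 1 + 3 * D / R"
    proof -
      have "(1 + 3 * D / R) * 1 \<le> (1 + 3 * D / R) * (1 + 3 * D / R)" using DR by (intro mult_left_mono) auto
      then show ?thesis by (simp add: power2_eq_square)
    qed
    ultimately have "(ai - l0)^2 > 3 * D / R" by (simp add: power2_commute)
    then show ?thesis using assms(3) by (simp add: field_simps)
  qed
  define q1 where "q1 = (a1 - l0)^2"
  define q2 where "q2 = (a2 - l0)^2"
  define q3 where "q3 = (a3 - l0)^2"
  have a13: "a1 \<le> a3" "a2 \<le> a3" "a3 \<le> a3" using assms by auto
  have g1: "R * q1 > 3 * D" using big[OF a13(1)] unfolding q1_def .
  have g2: "R * q2 > 3 * D" using big[OF a13(2)] unfolding q2_def .
  have g3: "R * q3 > 3 * D" using big[OF a13(3)] unfolding q3_def .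
  have b1: "R * q1 > 3 * a^2" using g1 zero_le_power2[of b] zero_le_power2[of c] unfolding D_def by (smt (verit))
  have b2: "R * q2 > 3 * b^2" using g2 zero_le_power2[of a] zero_le_power2[of c] unfolding D_def by (smt (verit))
  have b3: "R * q3 > 3 * c^2" using g3 zero_le_power2[of a] zero_le_power2[of b] unfolding D_def by (smt (verit))
  have "R * q1 > 0" "R * q2 > 0" "R * q3 > 0"
    using b1 b2 b3 zero_le_power2[of a] zero_le_power2[of b] zero_le_power2[of c] by linarith+
  then have qp: "q1 > 0" "q2 > 0" "q3 > 0" using assms(3) by (simp_all add: zero_less_mult_iff)
  have "3 * a^2 * (q2 * q3) < R * q1 * (q2 * q3)" using b1 qp by (intro mult_strict_right_mono) auto
  moreover have "3 * b^2 * (q1 * q3) < R * q2 * (q1 * q3)" using b2 qp by (intro mult_strict_right_mono) auto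
  moreover have "3 * c^2 * (q1 * q2) < R * q3 * (q1 * q2)" using b3 qp by (intro mult_strict_right_mono) auto
  ultimately have "poly P l0 > 0" unfolding polyP q1_def[symmetric] q2_def[symmetric] q3_def[symmetric]
    by (simp add: algebra_simps)
  then have "P \<noteq> 0" by auto
  then show ?thesis using finite_subset[OF sub poly_roots_finite] by blast
qed

lemma trip_fin:
  fixes a1 a2 a3 a b c R :: real
  assumes "a1 < a2" "a2 < a3" "R > 0"
  shows "finite {(p1,p2,p3). \<exists>l. (a1-l)*p1 = -a \<and> (a2-l)*p2 = -b \<and> (a3-l)*p3 = -c \<and> p1^2+p2^2+p3^2 = R}"
proof -
  define \<Lambda> where "\<Lambda> = {l. \<exists>p1 p2 p3. (a1-l)*p1 = -a \<and> (a2-l)*p2 = -b \<and> (a3-l)*p3 = -c \<and> p1^2+p2^2+p3^2 = R}"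
  have fL: "finite \<Lambda>" unfolding \<Lambda>_def by (rule lam_fin[OF assms])
  define T1 where "T1 = (\<Union>l\<in>\<Lambda>. {-a/(a1-l)} \<union> {y. y^2 = R - (b/(a2-l))^2 - (c/(a3-l))^2})"
  define T2 where "T2 = (\<Union>l\<in>\<Lambda>. {-b/(a2-l)} \<union> {y. y^2 = R - (a/(a1-l))^2 - (c/(a3-l))^2})"
  define T3 where "T3 = (\<Union>l\<in>\<Lambda>. {-c/(a3-l)} \<union> {y. y^2 = R - (a/(a1-l))^2 - (b/(a2-l))^2})"
  have fT: "finite T1" "finite T2" "finite T3" unfolding T1_def T2_def T3_def using fL sq_fin by auto
  have "{(p1,p2,p3). \<exists>l. (a1-l)*p1 = -a \<and> (a2-l)*p2 = -b \<and> (a3-l)*p3 = -c \<and> p1^2+p2^2+p3^2 = R} \<subseteq> T1 \<times> T2 \<times> T3"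
  proof (rule subsetI)
    fix t assume "t \<in> {(p1,p2,p3). \<exists>l. (a1-l)*p1 = -a \<and> (a2-l)*p2 = -b \<and> (a3-l)*p3 = -c \<and> p1^2+p2^2+p3^2 = R}"
    then obtain p1 p2 p3 l where t: "t = (p1,p2,p3)" and e1: "(a1-l)*p1 = -a" and e2: "(a2-l)*p2 = -b" and e3: "(a3-l)*p3 = -c" and eR: "p1^2+p2^2+p3^2 = R"
      by auto
    have lL: "l \<in> \<Lambda>" unfolding \<Lambda>_def using e1 e2 e3 eR by blast
    have q1: "a1 \<noteq> l \<Longrightarrow> p1 = -a/(a1-l)" using e1 by (simp add: field_simps)
    have q2: "a2 \<noteq> l \<Longrightarrow> p2 = -b/(a2-l)" using e2 by (simp add: field_simps)
    have q3: "a3 \<noteq> l \<Longrightarrow> p3 = -c/(a3-l)" using e3 by (simp add: field_simps)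
    have sq: "(- u / v)^2 = (u/v)^2" for u v :: real by (simp add: power2_eq_square)
    have "p1 \<in> T1"
    proof (cases "a1 = l")
      case True
      then have "a2 \<noteq> l" "a3 \<noteq> l" using assms by auto
      then have "p1^2 = R - (b/(a2-l))^2 - (c/(a3-l))^2" using q2 q3 eR sq by auto
      then show ?thesis unfolding T1_def using lL by blast
    next
      case False then show ?thesis unfolding T1_def using lL q1 by blast
    qed
    moreover have "p2 \<in> T2"
    proof (cases "a2 = l")
      case True
      then have "a1 \<noteq> l" "a3 \<noteq> l" using assms by auto
      then have "p2^2 = R - (a/(a1-l))^2 - (c/(a3-l))^2" using q1 q3 eR sq by auto
      then show ?thesis unfolding T2_def using lL by blast
    next
      case False then show ?thesis unfolding T2_def using lL q2 by blast
    qed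
    moreover have "p3 \<in> T3"
    proof (cases "a3 = l")
      case True
      then have "a1 \<noteq> l" "a2 \<noteq> l" using assms by auto
      then have "p3^2 = R - (a/(a1-l))^2 - (b/(a2-l))^2" using q1 q2 eR sq by auto
      then show ?thesis unfolding T3_def using lL by blast
    next
      case False then show ?thesis unfolding T3_def using lL q3 by blast
    qed
    ultimately show "t \<in> T1 \<times> T2 \<times> T3" using t by blast
  qed
  then show ?thesis by (rule finite_subset) (use fT in auto)
qed

lemma parallel:
  fixes p m :: "real^3"
  assumes "cross3 p m = 0" "p \<noteq> 0"
  shows "\<exists>l. m$1 = l*p$1 \<and> m$2 = l*p$2 \<and> m$3 = l*p$3"
proof -
  have e: "p$2*m$3 = p$3*m$2" "p$3*m$1 = p$1*m$3" "p$1*m$2 = p$2*m$1"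
    using assms(1) unfolding cross3_def vec_eq_iff forall_3 by (auto simp: vector_3)
  have "p$1 \<noteq> 0 \<or> p$2 \<noteq> 0 \<or> p$3 \<noteq> 0" using assms(2) unfolding vec_eq_iff forall_3 by auto
  then show ?thesis
  proof (elim disjE)
    assume h: "p$1 \<noteq> 0"
    show ?thesis by (rule exI[of _ "m$1/p$1"]) (use h e in \<open>auto simp: field_simps\<close>)
  next
    assume h: "p$2 \<noteq> 0"
    show ?thesis by (rule exI[of _ "m$2/p$2"]) (use h e in \<open>auto simp: field_simps\<close>)
  next
    assume h: "p$3 \<noteq> 0"
    show ?thesis by (rule exI[of _ "m$3/p$3"]) (use h e in \<open>auto simp: field_simps\<close>)
  qed
qed

lemma norm2_3: "(norm (p::real^3))^2 = (p$1)^2 + (p$2)^2 + (p$3)^2"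
  unfolding power2_norm_eq_inner by (simp add: inner_vec_def sum_3 power2_eq_square)

lemma E_fin:
  fixes a1 a2 a3 a b c R :: real
  assumes "a1 < a2" "a2 < a3"
  shows "finite {p. cross3 p (mvec a1 a2 a3 a b c p) = 0 \<and> (norm p)^2 = R}"
proof (cases "R > 0")
  case False
  have "{p. cross3 p (mvec a1 a2 a3 a b c p) = 0 \<and> (norm p)^2 = R} \<subseteq> {0}"
  proof
    fix p assume "p \<in> {p. cross3 p (mvec a1 a2 a3 a b c p) = 0 \<and> (norm p)^2 = R}"
    then have "(norm p)^2 \<le> 0" using False by simp
    then show "p \<in> {0}" by simp
  qed
  then show ?thesis by (rule finite_subset) simp
next
  case True
  define Tr where "Tr = {(p1,p2,p3). \<exists>l. (a1-l)*p1 = -a \<and> (a2-l)*p2 = -b \<and> (a3-l)*p3 = -c \<and> p1^2+p2^2+p3^2 = R}"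
  have "{p. cross3 p (mvec a1 a2 a3 a b c p) = 0 \<and> (norm p)^2 = R} \<subseteq> (\<lambda>(p1,p2,p3). vector [p1,p2,p3]) ` Tr"
  proof (rule subsetI)
    fix p :: "real^3" assume "p \<in> {p. cross3 p (mvec a1 a2 a3 a b c p) = 0 \<and> (norm p)^2 = R}"
    then have cr: "cross3 p (mvec a1 a2 a3 a b c p) = 0" and nR: "(norm p)^2 = R" by auto
    have "p \<noteq> 0" using nR True by auto
    then obtain l where l: "mvec a1 a2 a3 a b c p $1 = l*p$1" "mvec a1 a2 a3 a b c p $2 = l*p$2" "mvec a1 a2 a3 a b c p $3 = l*p$3"
      using parallel[OF cr] by blast
    have "(p$1, p$2, p$3) \<in> Tr" unfolding Tr_def using l nR[unfolded norm2_3] 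
      by (auto simp: mvec_nth algebra_simps intro!: exI[of _ l])
    moreover have "p = vector [p$1, p$2, p$3]" unfolding vec_eq_iff forall_3 by (simp add: vector_3)
    ultimately show "p \<in> (\<lambda>(p1,p2,p3). vector [p1,p2,p3]) ` Tr" by (metis (no_types, lifting) case_prod_conv image_eqI)
  qed
  moreover have "finite Tr" unfolding Tr_def by (rule trip_fin[OF assms True])
  ultimately show ?thesis using finite_subset by blast
qed

lemma lin4: "- (p::real) \<le> A \<Longrightarrow> - q \<le> B \<Longrightarrow> - r \<le> C \<Longrightarrow> V \<le> W \<Longrightarrow> 2 * (V - p - q - r) \<le> 2 * (W + A + B + C)"
  by simp

lemma Vbound:
  fixes z :: "real^3"
  assumes "0 < a1" "a1 < a2" "a2 < a3" "Vf a1 a2 a3 a b c z = V0"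
  shows "norm z \<le> max 1 (2 * (\<bar>V0\<bar> + \<bar>a\<bar> + \<bar>b\<bar> + \<bar>c\<bar>) / a1)"
proof -
  define n where "n = norm z"
  define K where "K = \<bar>V0\<bar> + \<bar>a\<bar> + \<bar>b\<bar> + \<bar>c\<bar>"
  have c1: "\<bar>z$1\<bar> \<le> n" "\<bar>z$2\<bar> \<le> n" "\<bar>z$3\<bar> \<le> n" unfolding n_def by (simp_all add: component_le_norm_cart)
  have "a1 * n^2 = a1 * (z$1)^2 + a1 * (z$2)^2 + a1 * (z$3)^2" unfolding n_def norm2_3 by (simp add: algebra_simps)
  also have "\<dots> \<le> a1 * (z$1)^2 + a2 * (z$2)^2 + a3 * (z$3)^2"
    using assms by (intro add_mono mult_right_mono) auto
  also have "\<dots> = 2 * (V0 - a*z$1 - b*z$2 - c*z$3)" using assms(4) unfolding Vf_def by (simp add: field_simps)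
  also have "\<dots> \<le> 2 * (\<bar>V0\<bar> + \<bar>a\<bar>*n + \<bar>b\<bar>*n + \<bar>c\<bar>*n)"
  proof -
    have "- (a*z$1) \<le> \<bar>a\<bar>*n" using c1(1) abs_mult[of a "z$1"] abs_ge_minus_self[of "a*z$1"]
      by (metis abs_ge_zero mult_left_mono order.trans)
    moreover have "- (b*z$2) \<le> \<bar>b\<bar>*n" using c1(2) abs_mult[of b "z$2"] abs_ge_minus_self[of "b*z$2"]
      by (metis abs_ge_zero mult_left_mono order.trans)
    moreover have "- (c*z$3) \<le> \<bar>c\<bar>*n" using c1(3) abs_mult[of c "z$3"] abs_ge_minus_self[of "c*z$3"]
      by (metis abs_ge_zero mult_left_mono order.trans)
    ultimately show ?thesis using abs_ge_self[of V0] by (rule lin4)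
  qed
  finally have main: "a1 * n^2 \<le> 2 * (\<bar>V0\<bar> + \<bar>a\<bar>*n + \<bar>b\<bar>*n + \<bar>c\<bar>*n)" .
  show ?thesis
  proof (cases "n \<le> 1")
    case True then show ?thesis unfolding n_def by simp
  next
    case False
    then have "\<bar>V0\<bar> \<le> \<bar>V0\<bar> * n" by (simp add: mult_le_cancel_left1)
    then have "a1 * n * n \<le> (2 * K) * n" using main unfolding K_def by (simp add: power2_eq_square algebra_simps)
    then have "a1 * n \<le> 2 * K" using False by simp
    then have "n \<le> 2 * K / a1" using assms(1) by (simp add: field_simps)
    then show ?thesis unfolding n_def K_def by simp
  qed
qed

lemma conc:
  fixes y :: "real \<Rightarrow> real^3" and \<sigma> \<epsilon> :: real
  assumes a: "0 < a1" "a1 < a2" "a2 < a3" and e: "\<epsilon> \<noteq> 0" "\<sigma> \<noteq> 0"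
    and d: "\<And>t. (y has_vector_derivative \<sigma> *\<^sub>R revised_field a1 a2 a3 a b c \<epsilon> (y t)) (at t)"
  shows "\<exists>q\<in>equilibria a1 a2 a3 a b c. (y \<longlongrightarrow> q) at_top"
proof -
  define m where "m = mvec a1 a2 a3 a b c"
  define F where "F = (\<lambda>z. \<sigma> *\<^sub>R revised_field a1 a2 a3 a b c \<epsilon> z)"
  have Fu: "F z = \<sigma> *\<^sub>R (cross3 z (m z) + \<epsilon> *\<^sub>R cross3 (cross3 z (m z)) (m z))" for z
    unfolding F_def revised_field_def m_def ..
  have dF: "\<And>t. (y has_vector_derivative F (y t)) (at t)" unfolding F_def by (rule d)
  have contF: "continuous_on UNIV F" unfolding F_def by (intro continuous_intros cont_rf)
  have dV: "((\<lambda>t. Vf a1 a2 a3 a b c (y t)) has_real_derivative 0) (at t)" for t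
  proof -
    have "inner (m (y t)) (F (y t)) = 0" unfolding Fu by (simp add: inner_add_right cross_ids)
    moreover have "((\<lambda>t. Vf a1 a2 a3 a b c (y t)) has_real_derivative inner (m (y t)) (F (y t))) (at t)"
      using d_V[OF d[of t]] unfolding m_def F_def .
    ultimately show ?thesis by simp
  qed
  have Vc: "Vf a1 a2 a3 a b c (y t) = Vf a1 a2 a3 a b c (y 0)" for t
    using DERIV_isconst_all[of "\<lambda>t. Vf a1 a2 a3 a b c (y t)"] dV by blast
  have bnd: "bounded (range y)"
    unfolding bounded_iff using Vbound[OF a Vc] by blast
  define W where "W = (\<lambda>z::real^3. (norm z)^2 / (2 * \<sigma> * \<epsilon>))"
  define \<phi> where "\<phi> = (\<lambda>z::real^3. (norm (cross3 z (m z)))^2)"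
  have contW: "continuous_on UNIV W" unfolding W_def using e by (intro continuous_intros) auto
  have contP: "continuous_on UNIV \<phi>" unfolding \<phi>_def m_def by (intro continuous_intros continuous_on_cross cont_mvec)
  have Pnn: "\<And>z. \<phi> z \<ge> 0" unfolding \<phi>_def by simp
  have Wd: "((\<lambda>t. W (y t)) has_real_derivative - \<phi> (y t)) (at t)" for t
  proof -
    have h: "((\<lambda>t. (norm (y t))^2) has_real_derivative 2 * inner (y t) (F (y t))) (at t)"
      using d_norm2[OF d[of t]] unfolding F_def .
    have "inner (y t) (F (y t)) = - \<sigma> * \<epsilon> * \<phi> (y t)"
      unfolding Fu \<phi>_def by (simp add: inner_add_right cross_ids dot_cross_self)
    then have "2 * inner (y t) (F (y t)) / (2 * \<sigma> * \<epsilon>) = - \<phi> (y t)" using e by (simp add: field_simps)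
    then show ?thesis unfolding W_def using DERIV_cdivide[OF h, of "2 * \<sigma> * \<epsilon>"] by simp
  qed
  have fin: "finite {p. \<phi> p = 0 \<and> W p = l}" for l
  proof -
    have "{p. \<phi> p = 0 \<and> W p = l} \<subseteq> {p. cross3 p (mvec a1 a2 a3 a b c p) = 0 \<and> (norm p)^2 = l * (2 * \<sigma> * \<epsilon>)}"
      unfolding \<phi>_def W_def m_def using e by (auto simp: field_simps)
    then show ?thesis using E_fin[OF a(2,3)] finite_subset by blast
  qed
  obtain q where "\<phi> q = 0" "(y \<longlongrightarrow> q) at_top"
    using generic_conv[OF dF contF bnd contW contP Pnn Wd fin] by blast
  then show ?thesis unfolding equilibria_def \<phi>_def m_def by auto
qed

theorem theorem5p2:
  fixes a1 a2 a3 a b c \<epsilon> :: real and x :: "real \<Rightarrow> real^3"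
  assumes "0 < a1" "a1 < a2" "a2 < a3"
    and "\<epsilon> \<noteq> 0"
    and "\<forall>t. (x has_vector_derivative revised_field a1 a2 a3 a b c \<epsilon> (x t)) (at t)"
  shows "\<exists>xm xM. xm \<in> equilibria a1 a2 a3 a b c \<and> xM \<in> equilibria a1 a2 a3 a b c \<and>
           (x \<longlongrightarrow> xM) at_bot \<and> (x \<longlongrightarrow> xm) at_top"
proof -
  have d1: "\<And>t. (x has_vector_derivative 1 *\<^sub>R revised_field a1 a2 a3 a b c \<epsilon> (x t)) (at t)"
    using assms(5) by simp
  obtain xm where xm: "xm \<in> equilibria a1 a2 a3 a b c" "(x \<longlongrightarrow> xm) at_top"
    using conc[OF assms(1-4) _ d1] by auto
  have d2: "((\<lambda>t. x (- t)) has_vector_derivative (-1) *\<^sub>R revised_field a1 a2 a3 a b c \<epsilon> (x (- t))) (at t)" for t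
  proof -
    have "((\<lambda>t. - t) has_vector_derivative (-1)) (at t)"
    proof -
      have "((\<lambda>t. - t) has_real_derivative (-1)) (at t)" by (auto intro!: derivative_eq_intros)
      then show ?thesis using has_real_derivative_iff_has_vector_derivative by blast
    qed
    from vector_diff_chain_at[OF this assms(5)[rule_format, of "- t"]]
    show ?thesis by (simp add: comp_def)
  qed
  obtain xM where xM: "xM \<in> equilibria a1 a2 a3 a b c" "((\<lambda>t. x (- t)) \<longlongrightarrow> xM) at_top"
    using conc[OF assms(1-4) _ d2] by auto
  have "(x \<longlongrightarrow> xM) at_bot" using xM(2) filterlim_at_bot_mirror by blast
  then show ?thesis using xm xM by blast
qed

end
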